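(* Let $V$ be a Banach space densely and continuously embedded in a Banach space $E$, $P$ a metric space, and for each $\mu\in P$ let $\{A^{(\mu)}(t)\}_{t\geq0}$ be a family of linear operators in $E$ with $V\subset D(A^{(\mu)}(t))$, $A^{(\mu)}(t)\in\mathcal L(V,E)$ and $t\mapsto A^{(\mu)}(t)\in\mathcal L(V,E)$ continuous. For each $\mu\in P$ let $\widehat A^{(\mu)}$ be a linear operator in $E$ with $V\subset D(\widehat A^{(\mu)})$, and assume $\lim_{T\to+\infty,\ \nu\to\mu}\frac1T\int_0^T\|A^{(\nu)}(t+h)-\widehat A^{(\mu)}\|_{\mathcal L(V,E)}\,dt=0$ uniformly with respect to $h\geq0$, for every $\mu\in P$. Set $A^{(\nu,\lambda)}(r):=A^{(\nu)}(r/\lambda)$ for $\lambda>0$. Then for any $\mu\in P$ and $t\geq s\geq0$, $\lim_{\lambda\to0^+,\ \nu\to\mu}\int_s^t\|A^{(\nu,\lambda)}(r)-\widehat A^{(\mu)}\|_{\mathcal L(V,E)}\,dr=0$.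
   Context: $\|\cdot\|_{\mathcal L(V,E)}$ denotes the operator norm of the restriction to $V$ of the operator, as a map from $V$ to $E$. *)

theory Defs
  imports "HOL-Analysis.Analysis"
begin

text \<open>Operator norm in L(V,E) of a (possibly unbounded) linear map from V to E,
  valued in [0,\<infinity>] (it is \<infinity> when the map is unbounded on the unit ball of V).\<close>
definition opnormVE :: "('v::real_normed_vector \<Rightarrow> 'e::real_normed_vector) \<Rightarrow> ennreal" where
  "opnormVE f = (SUP v\<in>{v. norm v \<le> 1}. ennreal (norm (f v)))"

definition rescaled :: "('p \<Rightarrow> real \<Rightarrow> 'a) \<Rightarrow> 'p \<Rightarrow> real \<Rightarrow> real \<Rightarrow> 'a" where
  "rescaled A \<nu> l r = A \<nu> (r / l)"

end

theory Submission
  imports Defs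
begin

lemma opn_bound:
  assumes lin: "linear h" and eq: "opnormVE h = ennreal c" and c: "c \<ge> 0"
  shows "norm (h x) \<le> c * norm x"
proof (cases "x = 0")
  case True then show ?thesis using lin by (simp add: linear_0)
next
  case False
  let ?v = "x /\<^sub>R norm x"
  have "norm ?v \<le> 1" using False by simp
  hence "ennreal (norm (h ?v)) \<le> opnormVE h" unfolding opnormVE_def
    by (intro SUP_upper) auto
  hence "norm (h ?v) \<le> c" using eq c by simp
  moreover have "h ?v = h x /\<^sub>R norm x" using lin by (simp add: linear_scale)
  ultimately have "norm (h x) / norm x \<le> c" by (simp add: divide_inverse mult.commute)
  thus ?thesis using False by (simp add: field_simps)
qed

lemma opn_blinfun: "opnormVE (blinfun_apply g) = ennreal (norm g)"
proof (rule antisym)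
  show "opnormVE (blinfun_apply g) \<le> ennreal (norm g)" unfolding opnormVE_def
  proof (rule SUP_least)
    fix v :: 'a assume "v \<in> {v. norm v \<le> 1}"
    hence "norm (g v) \<le> norm g" using norm_blinfun[of g v]
      by (smt (verit) mem_Collect_eq mult_left_le norm_ge_zero)
    thus "ennreal (norm (g v)) \<le> ennreal (norm g)" by (rule ennreal_leI)
  qed
next
  show "ennreal (norm g) \<le> opnormVE (blinfun_apply g)"
  proof (cases "opnormVE (blinfun_apply g)")
    case (real c)
    have "norm g \<le> c"
    proof (rule norm_blinfun_bound)
      show "0 \<le> c" using real by simp
      show "norm (blinfun_apply g x) \<le> c * norm x" for x
        by (rule opn_bound[OF bounded_linear.linear[OF blinfun.bounded_linear_right]]) (use real in auto)
    qed
    thus ?thesis using real by simp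
  qed simp
qed

lemma opn_unb:
  assumes lin: "linear f" and nb: "\<not> bounded_linear f"
  shows "opnormVE (\<lambda>v. blinfun_apply g v - f v) = top"
proof (rule ccontr)
  assume "opnormVE (\<lambda>v. blinfun_apply g v - f v) \<noteq> top"
  then obtain c where c: "opnormVE (\<lambda>v. blinfun_apply g v - f v) = ennreal c" "c \<ge> 0"
    by (cases "opnormVE (\<lambda>v. blinfun_apply g v - f v)") auto
  have lh: "linear (\<lambda>v. blinfun_apply g v - f v)"
    using lin bounded_linear.linear[OF blinfun.bounded_linear_right[of g]] by (intro linear_compose_sub) 
  have "bounded_linear f"
  proof (rule bounded_linear_intro[where K="norm g + c"])
    show "f (x + y) = f x + f y" for x y using lin by (simp add: linear_add)
    show "f (r *\<^sub>R x) = r *\<^sub>R f x" for r x using lin by (simp add: linear_scale)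
    fix x
    have "norm (g x - f x) \<le> c * norm x" by (rule opn_bound[OF lh c])
    moreover have "norm (g x) \<le> norm g * norm x" by (rule norm_blinfun)
    moreover have "norm (f x) \<le> norm (g x) + norm (g x - f x)"
      using norm_triangle_ineq4[of "g x" "g x - f x"] by simp
    moreover have "norm x * (norm g + c) = norm g * norm x + c * norm x" by (simp add: algebra_simps)
    ultimately show "norm (f x) \<le> norm x * (norm g + c)" by linarith
  qed
  with nb show False by simp
qed


lemma key_subst:
  fixes F :: "real \<Rightarrow> real"
  assumes Fc: "continuous_on {0..} F" and l: "l > 0" and s: "0 \<le> s"
  shows "(\<integral>\<^sup>+ r\<in>{s..t}. ennreal (F (r / l)) \<partial>lborel)
       = ennreal l * (\<integral>\<^sup>+ x\<in>{0..(t-s)/l}. ennreal (F (x + s/l)) \<partial>lborel)"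
proof -
  define G where "G r = ennreal (indicator {s..t} r *\<^sub>R F (r / l))" for r
  have Geq: "(\<lambda>r. ennreal (F (r / l)) * indicator {s..t} r) = G"
    by (auto simp: G_def indicator_def fun_eq_iff)
  have cont: "continuous_on {s..t} (\<lambda>r. F (r / l))"
    by (rule continuous_on_compose2[OF Fc]) (use l s in \<open>auto intro!: continuous_intros\<close>)
  have "(\<lambda>r. indicator {s..t} r *\<^sub>R F (r / l)) \<in> borel_measurable borel"
    by (rule borel_measurable_continuous_on_indicator[OF _ cont]) auto
  hence Gm: "G \<in> borel_measurable borel" unfolding G_def by measurable
  have "(\<integral>\<^sup>+ r. G r \<partial>lborel) = ennreal \<bar>l\<bar> * (\<integral>\<^sup>+ x. G (s + l * x) \<partial>lborel)"
    using nn_integral_real_affine[OF Gm, of l s] l by simp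
  also have "(\<lambda>x. G (s + l * x)) = (\<lambda>x. ennreal (F (x + s/l)) * indicator {0..(t-s)/l} x)"
  proof
    fix x
    have e1: "(s + l * x) / l = x + s / l" using l by (simp add: field_simps)
    have e2: "(s \<le> s + l * x \<and> s + l * x \<le> t) \<longleftrightarrow> (0 \<le> x \<and> x \<le> (t - s) / l)"
      using l by (auto simp: field_simps zero_le_mult_iff)
    show "G (s + l * x) = ennreal (F (x + s/l)) * indicator {0..(t-s)/l} x"
      unfolding G_def using e1 e2 by (auto simp: indicator_def)
  qed
  finally show ?thesis using l Geq by simp
qed

theorem lemma3p4:
  fixes j :: "'v::banach \<Rightarrow>\<^sub>L 'e::banach"
    and A :: "'p::metric_space \<Rightarrow> real \<Rightarrow> ('v \<Rightarrow>\<^sub>L 'e)"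
    and Ahat :: "'p \<Rightarrow> 'v \<Rightarrow> 'e"
  assumes j_inj: "inj (blinfun_apply j)"
    and j_dense: "closure (range (blinfun_apply j)) = UNIV"
    and A_cont: "\<And>\<mu>. continuous_on {0..} (A \<mu>)"
    and Ahat_lin: "\<And>\<mu>. linear (Ahat \<mu>)"
    and avg: "\<And>\<mu> \<epsilon>. \<epsilon> > 0 \<Longrightarrow>
       \<forall>\<^sub>F (T, \<nu>) in at_top \<times>\<^sub>F nhds \<mu>. \<forall>h\<ge>0.
          ennreal (1 / T) * (\<integral>\<^sup>+ t\<in>{0..T}. opnormVE (\<lambda>v. A \<nu> (t + h) v - Ahat \<mu> v) \<partial>lborel)
            \<le> ennreal \<epsilon>"
    and "0 \<le> s" and "s \<le> t"
  shows "((\<lambda>(l, \<nu>). \<integral>\<^sup>+ r\<in>{s..t}. opnormVE (\<lambda>v. rescaled A \<nu> l r v - Ahat \<mu> v) \<partial>lborel)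
           \<longlongrightarrow> 0) (at_right 0 \<times>\<^sub>F nhds \<mu>)"
proof (cases "bounded_linear (Ahat \<mu>)")
  case False
  have top: "opnormVE (\<lambda>v. A \<nu> r v - Ahat \<mu> v) = top" for \<nu> r
    by (rule opn_unb[OF Ahat_lin False])
  have ev1: "\<forall>\<^sub>F (T, \<nu>) in at_top \<times>\<^sub>F nhds \<mu>. (T::real) > 0"
    unfolding eventually_prod_filter
    by (rule exI[of _ "\<lambda>T. T > 0"], rule exI[of _ "\<lambda>_. True"]) (auto simp: eventually_gt_at_top)
  have "eventually (\<lambda>_. False) ((at_top :: real filter) \<times>\<^sub>F nhds \<mu>)"
  proof (rule eventually_mono[OF eventually_conj[OF avg[where \<mu>=\<mu> and \<epsilon>=1, OF zero_less_one] ev1]])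
    fix x :: "real \<times> 'p"
    assume H: "(case x of (T, \<nu>) \<Rightarrow> \<forall>h\<ge>0. ennreal (1 / T) * (\<integral>\<^sup>+ t\<in>{0..T}. opnormVE (\<lambda>v. A \<nu> (t + h) v - Ahat \<mu> v) \<partial>lborel) \<le> ennreal 1) \<and> (case x of (T, \<nu>) \<Rightarrow> T > 0)"
    obtain T \<nu> where x: "x = (T, \<nu>)" by (cases x)
    have h: "\<forall>h\<ge>0. ennreal (1 / T) * (\<integral>\<^sup>+ t\<in>{0..T}. opnormVE (\<lambda>v. A \<nu> (t + h) v - Ahat \<mu> v) \<partial>lborel) \<le> ennreal 1"
      and T: "T > 0" using H x by auto
    have h0: "ennreal (1 / T) * (\<integral>\<^sup>+ t\<in>{0..T}. opnormVE (\<lambda>v. A \<nu> (t + 0) v - Ahat \<mu> v) \<partial>lborel) \<le> ennreal 1"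
      using h by blast
    have "(\<integral>\<^sup>+ t\<in>{0..T}. opnormVE (\<lambda>v. A \<nu> (t + 0) v - Ahat \<mu> v) \<partial>lborel) = top * emeasure lborel {0..T}"
      unfolding top by (rule nn_integral_cmult_indicator) auto
    also have "\<dots> = top" using T by (simp add: ennreal_top_mult)
    finally have "ennreal (1 / T) * top \<le> ennreal 1" using h0 by simp
    thus False using T by (simp add: ennreal_mult_top top_unique)
  qed
  hence "at_top \<times>\<^sub>F nhds \<mu> = (bot :: (real \<times> 'p) filter)" by (simp add: eventually_False)
  thus ?thesis by (simp add: prod_filter_eq_bot)
next
  case True
  define B where "B = Blinfun (Ahat \<mu>)"
  have AB: "Ahat \<mu> = blinfun_apply B" unfolding B_def using True by (simp add: bounded_linear_Blinfun_apply)
  define F where "F \<nu> x = norm (A \<nu> x - B)" for \<nu> x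
  have opF: "opnormVE (\<lambda>v. A \<nu> x v - Ahat \<mu> v) = ennreal (F \<nu> x)" for \<nu> x
  proof -
    have "(\<lambda>v. A \<nu> x v - Ahat \<mu> v) = blinfun_apply (A \<nu> x - B)"
      by (simp add: AB fun_eq_iff blinfun.diff_left)
    thus ?thesis by (simp add: opn_blinfun F_def)
  qed
  have Fc: "continuous_on {0..} (F \<nu>)" for \<nu>
    unfolding F_def by (intro continuous_intros A_cont)
  have val: "(\<integral>\<^sup>+ r\<in>{s..t}. opnormVE (\<lambda>v. rescaled A \<nu> l r v - Ahat \<mu> v) \<partial>lborel)
        = (\<integral>\<^sup>+ r\<in>{s..t}. ennreal (F \<nu> (r / l)) \<partial>lborel)" for \<nu> l
    by (simp add: rescaled_def opF)
  show ?thesis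
  proof (cases "s = t")
    case True
    have z: "(\<integral>\<^sup>+ r\<in>{s..t}. ennreal (F \<nu> (r / l)) \<partial>lborel) = 0" for \<nu> l
    proof -
      have "(\<integral>\<^sup>+ r\<in>{s..t}. ennreal (F \<nu> (r / l)) \<partial>lborel) = (\<integral>\<^sup>+ (r::real). 0 \<partial>lborel)"
        by (rule nn_integral_cong_AE) (use AE_lborel_singleton[of s] True in \<open>auto elim!: eventually_mono simp: indicator_def\<close>)
      thus ?thesis by simp
    qed
    show ?thesis by (simp add: val z split_def)
  next
    case False
    hence st: "s < t" using \<open>s \<le> t\<close> by simp
    show ?thesis
    proof (rule order_tendstoI)
      fix a :: ennreal assume "a < 0" thus "\<forall>\<^sub>F x in at_right 0 \<times>\<^sub>F nhds \<mu>. a < (case x of (l, \<nu>) \<Rightarrow> \<integral>\<^sup>+ r\<in>{s..t}. opnormVE (\<lambda>v. rescaled A \<nu> l r v - Ahat \<mu> v) \<partial>lborel)"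
        by simp
    next
      fix a :: ennreal assume a: "0 < a"
      obtain b where b: "0 < b" "b < a" using dense[OF a] by blast
      then obtain r where r: "b = ennreal r" "r > 0"
        by (cases b) (auto simp: top_unique)
      define \<epsilon> where "\<epsilon> = r / (2 * (t - s))"
      have \<epsilon>: "\<epsilon> > 0" using r st by (simp add: \<epsilon>_def)
      from avg[OF \<epsilon>, of \<mu>] obtain Pf Pg where
        Pf: "eventually Pf at_top" and Pg: "eventually Pg (nhds \<mu>)"
        and PP: "\<And>T \<nu>. Pf T \<Longrightarrow> Pg \<nu> \<Longrightarrow> \<forall>h\<ge>0.
          ennreal (1 / T) * (\<integral>\<^sup>+ t\<in>{0..T}. opnormVE (\<lambda>v. A \<nu> (t + h) v - Ahat \<mu> v) \<partial>lborel)
            \<le> ennreal \<epsilon>"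
        unfolding eventually_prod_filter by auto
      from Pf obtain N where N: "\<And>T. T \<ge> N \<Longrightarrow> Pf T" by (auto simp: eventually_at_top_linorder)
      define \<delta> where "\<delta> = (t - s) / max N 1"
      have \<delta>: "\<delta> > 0" using st by (simp add: \<delta>_def)
      show "\<forall>\<^sub>F x in at_right 0 \<times>\<^sub>F nhds \<mu>. (case x of (l, \<nu>) \<Rightarrow> \<integral>\<^sup>+ r\<in>{s..t}. opnormVE (\<lambda>v. rescaled A \<nu> l r v - Ahat \<mu> v) \<partial>lborel) < a"
        unfolding eventually_prod_filter
      proof (intro exI conjI allI impI)
        show "eventually (\<lambda>l. l \<in> {0<..<\<delta>}) (at_right 0)" by (rule eventually_at_right_real[OF \<delta>])
        show "eventually Pg (nhds \<mu>)" by (rule Pg)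
        fix l \<nu> assume l: "l \<in> {0<..<\<delta>}" and g: "Pg \<nu>"
        define T where "T = (t - s) / l"
        have l0: "l > 0" using l by simp
        have "max N 1 = (t - s) / \<delta>" using st by (simp add: \<delta>_def)
        also have "\<dots> \<le> T" unfolding T_def using l st \<delta>
          by (intro divide_left_mono) auto
        finally have "N \<le> T" by simp
        hence PT: "Pf T" by (rule N)
        have h0: "s / l \<ge> 0" using \<open>0 \<le> s\<close> l0 by simp
        define I where "I = (\<integral>\<^sup>+ x\<in>{0..T}. ennreal (F \<nu> (x + s/l)) \<partial>lborel)"
        have bnd: "ennreal (1 / T) * I \<le> ennreal \<epsilon>"
          using PP[OF PT g] h0 by (simp add: I_def opF)
        have Tpos: "T > 0" using st l0 by (simp add: T_def)
        have "ennreal l = ennreal (t - s) * ennreal (1 / T)"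
          using st l0 by (simp add: T_def ennreal_mult[symmetric])
        hence "(\<integral>\<^sup>+ r\<in>{s..t}. ennreal (F \<nu> (r / l)) \<partial>lborel) = ennreal (t - s) * (ennreal (1 / T) * I)"
          using key_subst[OF Fc l0 \<open>0 \<le> s\<close>, of \<nu> t] by (simp add: I_def T_def mult.assoc)
        also have "\<dots> \<le> ennreal (t - s) * ennreal \<epsilon>" by (rule mult_left_mono[OF bnd]) simp
        also have "\<dots> = ennreal ((t - s) * \<epsilon>)" using st \<epsilon> by (simp add: ennreal_mult)
        also have "(t - s) * \<epsilon> = r / 2" using st by (simp add: \<epsilon>_def field_simps)
        also have "ennreal (r / 2) < ennreal r" using r by (intro ennreal_lessI) auto
        also have "ennreal r < a" using r b by simp
        finally show "(case (l, \<nu>) of (l, \<nu>) \<Rightarrow> \<integral>\<^sup>+ r\<in>{s..t}. opnormVE (\<lambda>v. rescaled A \<nu> l r v - Ahat \<mu> v) \<partial>lborel) < a"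
          by (simp add: val)
      qed
    qed
  qed
qed

end
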